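(* For each $\gamma\in\mathbb{R}$ let $\hat g_{-,\gamma}$ be any minimizer of $\hat h_{-,\gamma}$ over $\mathcal{F}$. Then: (1) $\hat h_{-,\gamma}(\hat g_{-,\gamma})$ is monotonically increasing in $\gamma$; (2) $\hat e_{\text{orig}}(\hat g_{-,\gamma})$ is monotonically decreasing in $\gamma$; (3) for fixed $\epsilon_{\text{abs}}>0$, the quantity $\frac{\hat h_{-,\gamma}(\hat g_{-,\gamma})}{\epsilon_{\text{abs}}}-\gamma$ is monotonically decreasing in $\gamma$ over the range where $\hat e_{\text{orig}}(\hat g_{-,\gamma})\le\epsilon_{\text{abs}}$, and monotonically increasing in $\gamma$ otherwise.
   Context: Setting: $\mathcal{F}$ a set of prediction models, $L\ge0$ a loss, and a fixed observed sample $(\mathbf{y}_{[i]},\mathbf{X}_{1[i]},\mathbf{X}_{2[i]})$, $i=1,\dots,n$, $n\ge2$. $\hat e_{\text{orig}}(f)=\frac1n\sum_iL\{f,(\mathbf{y}_{[i]},\mathbf{X}_{1[i]},\mathbf{X}_{2[i]})\}$; $\hat e_{\text{switch}}(f)=\frac1{n(n-1)}\sum_i\sum_{j\ne i}L\{f,(\mathbf{y}_{[j]},\mathbf{X}_{1[i]},\mathbf{X}_{2[j]})\}$. For $\gamma\in\mathbb{R}$, $\hat h_{-,\gamma}(f):=\gamma\hat e_{\text{orig}}(f)+\hat e_{\text{switch}}(f)$. Standing assumptions: $\min_{f\in\mathcal{F}}\hat e_{\text{orig}}(f)>0$ and minimizers of $\hat h_{-,\gamma}$ over $\mathcal{F}$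 exist for every $\gamma$. *)

theory Defs
  imports Complex_Main
begin

definition e_orig ::
  "('f \<Rightarrow> 'y \<times> 'a \<times> 'b \<Rightarrow> real) \<Rightarrow> nat \<Rightarrow> (nat \<Rightarrow> 'y) \<Rightarrow> (nat \<Rightarrow> 'a) \<Rightarrow> (nat \<Rightarrow> 'b) \<Rightarrow> 'f \<Rightarrow> real"
  where "e_orig L n y X1 X2 f = (1 / real n) * (\<Sum>i\<in>{1..n}. L f (y i, X1 i, X2 i))"

definition e_switch ::
  "('f \<Rightarrow> 'y \<times> 'a \<times> 'b \<Rightarrow> real) \<Rightarrow> nat \<Rightarrow> (nat \<Rightarrow> 'y) \<Rightarrow> (nat \<Rightarrow> 'a) \<Rightarrow> (nat \<Rightarrow> 'b) \<Rightarrow> 'f \<Rightarrow> real"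
  where "e_switch L n y X1 X2 f =
    (1 / (real n * (real n - 1))) * (\<Sum>i\<in>{1..n}. \<Sum>j\<in>{1..n} - {i}. L f (y j, X1 i, X2 j))"

definition h_minus ::
  "('f \<Rightarrow> 'y \<times> 'a \<times> 'b \<Rightarrow> real) \<Rightarrow> nat \<Rightarrow> (nat \<Rightarrow> 'y) \<Rightarrow> (nat \<Rightarrow> 'a) \<Rightarrow> (nat \<Rightarrow> 'b) \<Rightarrow> real \<Rightarrow> 'f \<Rightarrow> real"
  where "h_minus L n y X1 X2 \<gamma> f = \<gamma> * e_orig L n y X1 X2 f + e_switch L n y X1 X2 f"

end

theory Submission
  imports Defs
begin

theorem lemma15:
  fixes F :: "'f set"
    and L :: "'f \<Rightarrow> 'y \<times> 'a \<times> 'b \<Rightarrow> real"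
    and n :: nat and y :: "nat \<Rightarrow> 'y" and X1 :: "nat \<Rightarrow> 'a" and X2 :: "nat \<Rightarrow> 'b"
    and g :: "real \<Rightarrow> 'f"
  assumes n2: "n \<ge> 2"
    and L_nonneg: "\<And>f z. L f z \<ge> 0"
    and min_pos: "\<exists>f0\<in>F. (\<forall>f\<in>F. e_orig L n y X1 X2 f0 \<le> e_orig L n y X1 X2 f)
                        \<and> e_orig L n y X1 X2 f0 > 0"
    and min_exists: "\<forall>\<gamma>. \<exists>f0\<in>F. \<forall>f\<in>F. h_minus L n y X1 X2 \<gamma> f0 \<le> h_minus L n y X1 X2 \<gamma> f"
    and g_min: "\<And>\<gamma>. g \<gamma> \<in> F \<and> (\<forall>f\<in>F. h_minus L n y X1 X2 \<gamma> (g \<gamma>) \<le> h_minus L n y X1 X2 \<gamma> f)"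
  shows "mono (\<lambda>\<gamma>. h_minus L n y X1 X2 \<gamma> (g \<gamma>))
         \<and> antimono (\<lambda>\<gamma>. e_orig L n y X1 X2 (g \<gamma>))
         \<and> (\<forall>\<epsilon>>0.
           antimono_on {\<gamma>. e_orig L n y X1 X2 (g \<gamma>) \<le> \<epsilon>}
             (\<lambda>\<gamma>. h_minus L n y X1 X2 \<gamma> (g \<gamma>) / \<epsilon> - \<gamma>)
         \<and> mono_on {\<gamma>. e_orig L n y X1 X2 (g \<gamma>) > \<epsilon>}
             (\<lambda>\<gamma>. h_minus L n y X1 X2 \<gamma> (g \<gamma>) / \<epsilon> - \<gamma>))"
proof -
  define E where "E = e_orig L n y X1 X2"
  define S where "S = e_switch L n y X1 X2"
  have H: "\<And>c f. h_minus L n y X1 X2 c f = c * E f + S f"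
    by (simp add: h_minus_def E_def S_def)
  have Enn: "\<And>f. E f \<ge> 0"
    unfolding E_def e_orig_def by (intro mult_nonneg_nonneg sum_nonneg) (auto simp: L_nonneg)
  have opt: "\<And>a b. a * E (g a) + S (g a) \<le> a * E (g b) + S (g b)"
    using g_min H by metis
  have m1: "mono (\<lambda>\<gamma>. h_minus L n y X1 X2 \<gamma> (g \<gamma>))"
  proof (rule monoI)
    fix a b :: real assume ab: "a \<le> b"
    have "a * E (g b) \<le> b * E (g b)" using ab Enn by (simp add: mult_right_mono)
    then show "h_minus L n y X1 X2 a (g a) \<le> h_minus L n y X1 X2 b (g b)"
      using opt[of a b] unfolding H by linarith
  qed
  have m2: "antimono (\<lambda>\<gamma>. e_orig L n y X1 X2 (g \<gamma>))"
  proof (rule antimonoI)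
    fix a b :: real assume ab: "a \<le> b"
    show "e_orig L n y X1 X2 (g b) \<le> e_orig L n y X1 X2 (g a)"
    proof (cases "a = b")
      case False
      have "(b - a) * (E (g b) - E (g a)) \<le> 0"
        using opt[of a b] opt[of b a] by (simp add: algebra_simps)
      then have "E (g b) - E (g a) \<le> 0" using ab False
        by (simp add: mult_le_0_iff)
      then show ?thesis by (simp add: E_def)
    qed simp
  qed
  have m3: "\<forall>\<epsilon>>0.
           antimono_on {\<gamma>. e_orig L n y X1 X2 (g \<gamma>) \<le> \<epsilon>}
             (\<lambda>\<gamma>. h_minus L n y X1 X2 \<gamma> (g \<gamma>) / \<epsilon> - \<gamma>)
         \<and> mono_on {\<gamma>. e_orig L n y X1 X2 (g \<gamma>) > \<epsilon>}
             (\<lambda>\<gamma>. h_minus L n y X1 X2 \<gamma> (g \<gamma>) / \<epsilon> - \<gamma>)"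
  proof (intro allI impI conjI)
    fix \<epsilon> :: real assume ep: "\<epsilon> > 0"
    show "antimono_on {\<gamma>. e_orig L n y X1 X2 (g \<gamma>) \<le> \<epsilon>}
             (\<lambda>\<gamma>. h_minus L n y X1 X2 \<gamma> (g \<gamma>) / \<epsilon> - \<gamma>)"
    proof (rule monotone_onI)
      fix a b assume a: "a \<in> {\<gamma>. e_orig L n y X1 X2 (g \<gamma>) \<le> \<epsilon>}" and ab: "a \<le> b"
      have ea: "E (g a) \<le> \<epsilon>" using a by (simp add: E_def)
      have "(b - a) * E (g a) \<le> (b - a) * \<epsilon>" using ab ea by (simp add: mult_left_mono)
      then have "b * E (g b) + S (g b) \<le> a * E (g a) + S (g a) + (b - a) * \<epsilon>"
        using opt[of b a] by (simp add: algebra_simps)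
      then have "(b * E (g b) + S (g b)) / \<epsilon> \<le> (a * E (g a) + S (g a) + (b - a) * \<epsilon>) / \<epsilon>"
        using ep by (simp add: divide_right_mono)
      also have "\<dots> = (a * E (g a) + S (g a)) / \<epsilon> + (b - a)"
        using ep by (simp add: add_divide_distrib)
      finally have "(b * E (g b) + S (g b)) / \<epsilon> - b \<le> (a * E (g a) + S (g a)) / \<epsilon> - a"
        by simp
      then show "h_minus L n y X1 X2 b (g b) / \<epsilon> - b \<le> h_minus L n y X1 X2 a (g a) / \<epsilon> - a"
        by (simp add: H)
    qed
    show "mono_on {\<gamma>. e_orig L n y X1 X2 (g \<gamma>) > \<epsilon>}
             (\<lambda>\<gamma>. h_minus L n y X1 X2 \<gamma> (g \<gamma>) / \<epsilon> - \<gamma>)"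
    proof (rule monotone_onI)
      fix a b assume b: "b \<in> {\<gamma>. e_orig L n y X1 X2 (g \<gamma>) > \<epsilon>}" and ab: "a \<le> b"
      have eb: "E (g b) > \<epsilon>" using b by (simp add: E_def)
      have "(b - a) * \<epsilon> \<le> (b - a) * E (g b)" using ab eb by (simp add: mult_left_mono)
      then have "a * E (g a) + S (g a) + (b - a) * \<epsilon> \<le> b * E (g b) + S (g b)"
        using opt[of a b] by (simp add: algebra_simps)
      then have "(a * E (g a) + S (g a) + (b - a) * \<epsilon>) / \<epsilon> \<le> (b * E (g b) + S (g b)) / \<epsilon>"
        using ep by (simp add: divide_right_mono)
      moreover have "(a * E (g a) + S (g a) + (b - a) * \<epsilon>) / \<epsilon> = (a * E (g a) + S (g a)) / \<epsilon> + (b - a)"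
        using ep by (simp add: add_divide_distrib)
      ultimately have "(a * E (g a) + S (g a)) / \<epsilon> - a \<le> (b * E (g b) + S (g b)) / \<epsilon> - b"
        by simp
      then show "h_minus L n y X1 X2 a (g a) / \<epsilon> - a \<le> h_minus L n y X1 X2 b (g b) / \<epsilon> - b"
        by (simp add: H)
    qed
  qed
  show ?thesis using m1 m2 m3 by blast
qed

end
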